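(* Let $d\ge1$, $\nu>0$, $\gamma>0$, and let $K$ be a random variable with $\Pr\{K=k\}=\alpha_k^{(\nu,\gamma)}$, $k=0,1,\dots$. Then $\sum_{k=0}^\infty\alpha_k^{(\nu,\gamma)}=1$; if $\nu>1$ then $E K=\frac{d\gamma^2}{2\nu-2}$; and if $\nu>2$ then \[ \operatorname{Var}(K)=\frac{d\gamma^2}{2(\nu-1)}\left(1+\frac{\gamma^2}{2}\,\frac{d+2(\nu-1)}{(\nu-1)(\nu-2)}\right). \]
   Context: $\alpha_k^{(\nu,\gamma)}=\frac{\Gamma(k+\frac d2)}{k!\,\Gamma(\frac d2)\Gamma(\nu)}\gamma^{2k}\int_0^{\infty}e^{-a}a^{\nu+\frac d2-1}(a+\gamma^2)^{-k-\frac d2}\,da$. *)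

theory Defs
  imports "HOL-Analysis.Analysis"
begin

definition alpha :: "nat \<Rightarrow> real \<Rightarrow> real \<Rightarrow> nat \<Rightarrow> real" where
  "alpha d \<nu> \<gamma> k =
     Gamma (real k + real d / 2) / (fact k * Gamma (real d / 2) * Gamma \<nu>) * \<gamma> ^ (2 * k) *
     (LINT a:{0<..}|lborel. exp (- a) * a powr (\<nu> + real d / 2 - 1)
                             * (a + \<gamma>\<^sup>2) powr (- real k - real d / 2))"

end

theory Submission imports Defs begin

lemma ser0:
  fixes x r :: real
  assumes "0 \<le> x" "x < 1"
  shows "(\<lambda>k. pochhammer r k / fact k * x^k) sums (1 - x) powr (-r)"
proof -
  have "(\<lambda>n. ((-r) gchoose n) * (-x)^n) sums (1 + -x) powr (-r)"
    by (rule gen_binomial_real) (use assms in auto)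
  moreover have "(\<lambda>n. ((-r) gchoose n) * (-x)^n) = (\<lambda>k. pochhammer r k / fact k * x^k)"
  proof
    fix n
    have "((-r) gchoose n) * (-x)^n = ((-1)^n * (-1)^n) * (pochhammer r n / fact n * x^n)"
      by (simp add: gbinomial_pochhammer power_minus[of x])
    also have "(-1::real)^n * (-1)^n = 1" by (simp flip: power_add)
    finally show "((-r) gchoose n) * (-x)^n = pochhammer r n / fact n * x^n" by simp
  qed
  ultimately show ?thesis by simp
qed

lemma ser1:
  fixes x r :: real
  assumes "0 \<le> x" "x < 1"
  shows "(\<lambda>k. real k * (pochhammer r k / fact k * x^k)) sums (r * x * (1 - x) powr (-r-1))"
proof -
  have "(\<lambda>j. r * x * (pochhammer (r+1) j / fact j * x^j)) sums (r * x * (1 - x) powr (-(r+1)))"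
    by (rule sums_mult, rule ser0) (use assms in auto)
  moreover have "(\<lambda>j. r * x * (pochhammer (r+1) j / fact j * x^j)) =
     (\<lambda>j. real (Suc j) * (pochhammer r (Suc j) / fact (Suc j) * x^(Suc j)))" (is "(\<lambda>j. ?l j) = (\<lambda>j. ?r j)")
  proof (rule ext)
    fix j
    have F: "fact (Suc j) = real (Suc j) * (fact j::real)" by (simp only: fact_Suc)
    have "real (Suc j) \<noteq> 0" "(fact j::real) \<noteq> 0" by auto
    thus "?l j = ?r j" by (simp only: pochhammer_rec F power_Suc) (simp add: field_simps del: of_nat_Suc)
  qed
  moreover have e: "-(r+1) = -r-1" by simp
  ultimately have "(\<lambda>j. real (Suc j) * (pochhammer r (Suc j) / fact (Suc j) * x^(Suc j))) sums (r * x * (1 - x) powr (-r-1))"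
    by (simp only:)
  thus ?thesis by (subst (asm) sums_Suc_iff) simp
qed

lemma ser2:
  fixes x r :: real
  assumes "0 \<le> x" "x < 1"
  shows "(\<lambda>k. real k * (real k - 1) * (pochhammer r k / fact k * x^k)) sums (r * (r+1) * x^2 * (1 - x) powr (-r-2))"
proof -
  have "(\<lambda>j. r * x * (real j * (pochhammer (r+1) j / fact j * x^j))) sums (r * x * ((r+1) * x * (1 - x) powr (-(r+1)-1)))"
    by (rule sums_mult, rule ser1) (use assms in auto)
  moreover have "(\<lambda>j. r * x * (real j * (pochhammer (r+1) j / fact j * x^j))) =
     (\<lambda>j. real (Suc j) * (real (Suc j) - 1) * (pochhammer r (Suc j) / fact (Suc j) * x^(Suc j)))" (is "(\<lambda>j. ?l j) = (\<lambda>j. ?r j)")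
  proof (rule ext)
    fix j
    have F: "fact (Suc j) = real (Suc j) * (fact j::real)" by (simp only: fact_Suc)
    have "real (Suc j) \<noteq> 0" "(fact j::real) \<noteq> 0" by auto
    thus "?l j = ?r j" by (simp only: pochhammer_rec F power_Suc) (simp add: field_simps del: of_nat_Suc, simp add: algebra_simps)
  qed
  ultimately have "(\<lambda>j. real (Suc j) * (real (Suc j) - 1) * (pochhammer r (Suc j) / fact (Suc j) * x^(Suc j))) sums (r * (r+1) * x^2 * (1 - x) powr (-r-2))"
    by (simp add: algebra_simps power2_eq_square del: of_nat_Suc)
  thus ?thesis by (subst (asm) sums_Suc_iff) simp
qed

lemma gam:
  fixes s :: real assumes "s > 0"
  shows "has_bochner_integral lborel (\<lambda>a. indicator {0<..} a * (exp (-a) * a powr (s-1))) (Gamma s)"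
proof -
  have eq: "(\<lambda>a. indicator {0<..} a * (exp (-a) * a powr (s-1))) = (\<lambda>t. indicator {0..} t * t powr (s - 1) / exp t)"
    by (rule ext) (auto simp: indicator_def exp_minus field_simps)
  show ?thesis unfolding eq
    by (rule has_bochner_integral_nn_integral)
      (use assms Gamma_conv_nn_integral_real[OF assms] in \<open>auto simp: Gamma_real_pos less_imp_le\<close>)
qed

lemma sums_integral:
  fixes g :: "nat \<Rightarrow> 'a \<Rightarrow> real"
  assumes meas: "\<And>k. g k \<in> borel_measurable M" and nn: "\<And>k x. 0 \<le> g k x"
    and s: "\<And>x. (\<lambda>k. g k x) sums G x" and G: "integrable M G"
  shows "(\<lambda>k. integral\<^sup>L M (g k)) sums integral\<^sup>L M G"
proof -
  have le: "(\<Sum>k\<in>I. g k x) \<le> G x" if "finite I" for I x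
    using sum_le_suminf[OF sums_summable[OF s] that] nn sums_unique[OF s[of x]] by auto
  have int: "integrable M (g k)" for k
  proof (rule Bochner_Integration.integrable_bound[OF G meas], rule AE_I2)
    fix x
    have "g k x \<le> G x" using le[of "{k}" x] by simp
    thus "norm (g k x) \<le> norm (G x)" using nn[of k x] by simp
  qed
  have "(\<lambda>n. integral\<^sup>L M (\<lambda>x. \<Sum>k<n. g k x)) \<longlonglongrightarrow> integral\<^sup>L M G"
  proof (rule integral_dominated_convergence[where w=G])
    show "G \<in> borel_measurable M" using G by auto
    show "(\<lambda>x. \<Sum>k<n. g k x) \<in> borel_measurable M" for n using meas by auto
    show "AE x in M. (\<lambda>n. \<Sum>k<n. g k x) \<longlonglongrightarrow> G x" using s by (simp add: sums_def)
    show "AE x in M. norm (\<Sum>k<n. g k x) \<le> G x" for n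
      using le nn by (auto intro!: AE_I2 simp: sum_nonneg)
  qed (use G in auto)
  thus ?thesis unfolding sums_def using int by (simp add: integral_sum)
qed

lemma key:
  fixes a b G \<nu> r :: real and j :: nat
  assumes "a > 0" "b > 0"
  shows "a powr (\<nu>+r-1) * b powr (-r) * ((a/b) powr (-r - real j) * (G/b)^j) = G^j * a powr (\<nu> - real j - 1)"
proof -
  have "(a/b) powr (-r - real j) = a powr (-r - real j) / b powr (-r - real j)"
    using assms by (simp add: powr_divide)
  moreover have "b powr (-r) / b powr (-r - real j) = b ^ j"
    using assms by (simp add: powr_diff[symmetric] powr_realpow)
  moreover have "a powr (\<nu>+r-1) * a powr (-r - real j) = a powr (\<nu> - real j - 1)"
    by (subst powr_add[symmetric]) (rule arg_cong[where f="\<lambda>t. a powr t"], simp)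
  ultimately show ?thesis using assms
    by (simp add: field_simps power_divide)
qed

lemma interchange:
  fixes w q :: "nat \<Rightarrow> real" and G c r \<nu> C s :: real and V :: "real \<Rightarrow> real"
  assumes G: "G > 0" and s: "s > 0" and w: "\<And>k. w k \<ge> 0" and q: "\<And>k. q k \<ge> 0" and c: "c \<ge> 0"
  and pw: "\<And>a. a > 0 \<Longrightarrow> (\<lambda>k. w k * (q k * (G/(a+G))^k)) sums V a"
  and val: "\<And>a. a > 0 \<Longrightarrow> (c * exp (-a) * a powr (\<nu>+r-1) * (a+G) powr (-r)) * V a = C * (exp (-a) * a powr (s-1))"
  shows "(\<lambda>k. w k * integral\<^sup>L lborel (\<lambda>a. indicator {0<..} a * (q k * (G/(a+G))^k * (c * exp (-a) * a powr (\<nu>+r-1) * (a+G) powr (-r))))) sums (C * Gamma s)"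
proof -
  define E where "E a = c * exp (-a) * a powr (\<nu>+r-1) * (a+G) powr (-r)" for a
  define g where "g k a = indicator {0<..} a * ((w k * (q k * (G/(a+G))^k)) * E a)" for k a
  define F where "F a = C * (indicator {0<..} a * (exp (-a) * a powr (s-1)))" for a :: real
  have gam': "has_bochner_integral lborel F (C * Gamma s)"
    unfolding F_def by (rule has_bochner_integral_mult_right, rule gam[OF s])
  have "(\<lambda>k. integral\<^sup>L lborel (g k)) sums integral\<^sup>L lborel F"
  proof (rule sums_integral)
    show "g k \<in> borel_measurable lborel" for k unfolding g_def E_def by measurable
    show "0 \<le> g k x" for k x
      unfolding g_def E_def using w q c G
      by (auto intro!: mult_nonneg_nonneg simp: indicator_def)
    show "(\<lambda>k. g k x) sums F x" for x
    proof (cases "x > 0")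
      case True
      have "(\<lambda>k. w k * (q k * (G/(x+G))^k) * E x) sums (V x * E x)"
        by (rule sums_mult2, rule pw[OF True])
      moreover have "E x * V x = C * (exp (-x) * x powr (s-1))" using val[OF True] unfolding E_def .
      ultimately have "(\<lambda>k. w k * (q k * (G/(x+G))^k) * E x) sums F x"
        using True unfolding F_def by (simp add: mult.commute)
      moreover have "g k x = w k * (q k * (G/(x+G))^k) * E x" for k using True unfolding g_def by simp
      ultimately show ?thesis by simp
    next
      case False
      thus ?thesis unfolding g_def F_def by simp
    qed
    show "integrable lborel F" using gam' by (auto simp: has_bochner_integral_iff)
  qed
  also have "integral\<^sup>L lborel F = C * Gamma s" using gam' by (auto simp: has_bochner_integral_iff)
  also have "(\<lambda>k. integral\<^sup>L lborel (g k)) = (\<lambda>k. w k * integral\<^sup>L lborel (\<lambda>a. indicator {0<..} a * (q k * (G/(a+G))^k * E a)))"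
  proof
    fix k
    have "g k = (\<lambda>a. w k * (indicator {0<..} a * (q k * (G/(a+G))^k * E a)))"
      unfolding g_def by (auto simp: mult_ac)
    thus "integral\<^sup>L lborel (g k) = w k * integral\<^sup>L lborel (\<lambda>a. indicator {0<..} a * (q k * (G/(a+G))^k * E a))"
      by simp
  qed
  finally show ?thesis unfolding E_def .
qed

lemma alg: fixes X1 X2 X3 X4 :: real assumes "X3 > 0" "X4 > 0" "X3 = X4 + 1"
  shows "(X1/2) * (X1/2+1) * X2^2 / (X3*X4) + (1 - 2*((X1/2)*X2/X3)) * ((X1/2)*X2/X3) + ((X1/2)*X2/X3)^2 * 1
     = X1 * X2 / (2 * X3) * (1 + X2 / 2 * ((X1 + 2 * X3) / (X3 * X4)))"
proof -
  have e: "(X1/2) * (X1/2+1) * X2^2 / (X3*X4) + (1 - 2*((X1/2)*X2/X3)) * ((X1/2)*X2/X3) + ((X1/2)*X2/X3)^2 * 1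
     = (X1*(X1+2)*X2^2*X3 + 2*X1*X2*X3*X4 - X1*X1*X2^2*X4) / (4*X3*X3*X4)"
    using assms(1,2) by (simp add: field_simps power2_eq_square)
  have f: "X1 * X2 / (2 * X3) * (1 + X2 / 2 * ((X1 + 2 * X3) / (X3 * X4))) = (2*X1*X2*X3*X4 + X1*X2^2*(X1+2*X3)) / (4*X3*X3*X4)"
    using assms(1,2) by (simp add: field_simps power2_eq_square)
  show ?thesis unfolding e f using assms(3) by (simp add: algebra_simps power2_eq_square)
qed

theorem theorem7:
  fixes d :: nat and \<nu> \<gamma> :: real
  assumes "d \<ge> 1" and "\<nu> > 0" and "\<gamma> > 0"
  shows "(\<lambda>k. alpha d \<nu> \<gamma> k) sums 1 \<and>
         (\<nu> > 1 \<longrightarrow> (\<lambda>k. real k * alpha d \<nu> \<gamma> k) sums (real d * \<gamma>\<^sup>2 / (2 * \<nu> - 2))) \<and>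
         (\<nu> > 2 \<longrightarrow>
           (\<lambda>k. (real k - real d * \<gamma>\<^sup>2 / (2 * \<nu> - 2))\<^sup>2 * alpha d \<nu> \<gamma> k) sums
             (real d * \<gamma>\<^sup>2 / (2 * (\<nu> - 1)) *
               (1 + \<gamma>\<^sup>2 / 2 * ((real d + 2 * (\<nu> - 1)) / ((\<nu> - 1) * (\<nu> - 2))))))"
proof -
  define r where "r = real d / 2"
  define G where "G = \<gamma>\<^sup>2"
  define c where "c = 1 / Gamma \<nu>"
  define q where "q k = pochhammer r k / fact k" for k
  have r0: "r > 0" using assms(1) unfolding r_def by simp
  have G0: "G > 0" using assms(3) unfolding G_def by simp
  have c0: "c > 0" using assms(2) unfolding c_def by (simp add: Gamma_real_pos)
  have q0: "q k \<ge> 0" for k unfolding q_def using r0 by (simp add: pochhammer_pos less_imp_le)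
  have rnp: "r \<notin> \<int>\<^sub>\<le>\<^sub>0" using r0 nonpos_Ints_nonpos by force
  define I where "I k = integral\<^sup>L lborel (\<lambda>a. indicator {0<..} a * (q k * (G/(a+G))^k * (c * exp (-a) * a powr (\<nu>+r-1) * (a+G) powr (-r))))" for k
  have alpha_eq: "alpha d \<nu> \<gamma> k = I k" for k
  proof -
    define P where "P = Gamma (real k + r) / (fact k * Gamma r * Gamma \<nu>) * \<gamma> ^ (2 * k)"
    have "alpha d \<nu> \<gamma> k = P * (LINT a:{0<..}|lborel. exp (- a) * a powr (\<nu> + r - 1) * (a + G) powr (- real k - r))"
      unfolding alpha_def P_def r_def G_def ..
    also have "\<dots> = (LINT a:{0<..}|lborel. P * (exp (- a) * a powr (\<nu> + r - 1) * (a + G) powr (- real k - r)))"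
      by simp
    also have "\<dots> = (LINT a:{0<..}|lborel. q k * (G/(a+G))^k * (c * exp (-a) * a powr (\<nu>+r-1) * (a+G) powr (-r)))"
    proof (rule set_lebesgue_integral_cong, simp, intro allI impI)
      fix a :: real assume "a \<in> {0<..}"
      hence a: "a > 0" by simp
      have b: "a + G > 0" using a G0 by simp
      have g1: "Gamma (real k + r) = pochhammer r k * Gamma r"
        using pochhammer_Gamma[OF rnp, of k] Gamma_real_pos[OF r0] by (simp add: add.commute)
      have g2: "\<gamma> ^ (2 * k) = G ^ k" unfolding G_def by (simp add: power_mult)
      have g3: "(a + G) powr (- real k - r) = (a + G) powr (-r) / (a+G) ^ k"
      proof -
        have e: "- real k - r = -r - real k" by simp
        show ?thesis unfolding e powr_diff using powr_realpow[OF b] by simp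
      qed
      have "Gamma r > 0" using Gamma_real_pos[OF r0] .
      thus "P * (exp (- a) * a powr (\<nu> + r - 1) * (a + G) powr (- real k - r)) =
            q k * (G/(a+G))^k * (c * exp (-a) * a powr (\<nu>+r-1) * (a+G) powr (-r))"
        unfolding P_def q_def c_def g1 g2 g3 by (simp add: field_simps power_divide)
    qed
    also have "\<dots> = I k" unfolding I_def set_lebesgue_integral_def by simp
    finally show ?thesis .
  qed
  have om: "1 - G/(a+G) = a/(a+G)" if "a > 0" for a using that G0 by (simp add: field_simps)
  have xr: "0 \<le> G/(a+G)" "G/(a+G) < 1" if "a > 0" for a using that G0 by auto
  have S0: "(\<lambda>k. 1 * I k) sums (c * Gamma \<nu>)"
    unfolding I_def
  proof (rule interchange[OF G0 assms(2) _ q0 less_imp_le[OF c0], where V="\<lambda>a. (1 - G/(a+G)) powr (-r)"])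
    show "(\<lambda>k. 1 * (q k * (G/(a+G))^k)) sums (1 - G/(a+G)) powr (-r)" if "a > 0" for a
      using ser0[OF xr[OF that], of r] unfolding q_def by simp
    show "c * exp (- a) * a powr (\<nu> + r - 1) * (a + G) powr - r * (1 - G / (a + G)) powr - r =
          c * (exp (- a) * a powr (\<nu> - 1))" if "a > 0" for a
      using key[where a=a and b="a+G" and G=G and \<nu>=\<nu> and r=r and j=0] that G0 unfolding om[OF that] by (simp add: mult_ac)
  qed simp
  have S1: "(\<lambda>k. real k * I k) sums (c * r * G * Gamma (\<nu> - 1))" if "\<nu> > 1"
    unfolding I_def
  proof (rule interchange[OF G0 _ _ q0 less_imp_le[OF c0], where V="\<lambda>a. r * (G/(a+G)) * (1 - G/(a+G)) powr (-r-1)"])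
    show "(\<lambda>k. real k * (q k * (G/(a+G))^k)) sums (r * (G/(a+G)) * (1 - G/(a+G)) powr (-r-1))" if "a > 0" for a
      using ser1[OF xr[OF that], of r] unfolding q_def by simp
    show "c * exp (- a) * a powr (\<nu> + r - 1) * (a + G) powr - r * (r * (G/(a+G)) * (1 - G / (a + G)) powr (-r-1)) =
          c * r * G * (exp (- a) * a powr (\<nu> - 1 - 1))" if "a > 0" for a
    proof -
      have K: "a powr (\<nu>+r-1) * (a+G) powr (-r) * ((a/(a+G)) powr (-r - 1) * (G/(a+G))^1) = G^1 * a powr (\<nu> - 1 - 1)"
        using key[where a=a and b="a+G" and G=G and \<nu>=\<nu> and r=r and j=1] that G0 by simp
      have "c * exp (- a) * a powr (\<nu> + r - 1) * (a + G) powr - r * (r * (G/(a+G)) * (a/(a+G)) powr (-r-1))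
          = (c * r * exp (-a)) * (a powr (\<nu>+r-1) * (a+G) powr (-r) * ((a/(a+G)) powr (-r - 1) * (G/(a+G))^1))"
        by (simp only: mult_ac power_one_right)
      also have "\<dots> = c * r * G * (exp (- a) * a powr (\<nu> - 1 - 1))" unfolding K by (simp only: mult_ac power_one_right)
      finally show ?thesis unfolding om[OF that] .
    qed
  qed (use that in simp_all)
  have S2: "(\<lambda>k. (real k * (real k - 1)) * I k) sums (c * (r * (r+1)) * G^2 * Gamma (\<nu> - 2))" if "\<nu> > 2"
    unfolding I_def
  proof (rule interchange[OF G0 _ _ q0 less_imp_le[OF c0], where V="\<lambda>a. r * (r+1) * (G/(a+G))^2 * (1 - G/(a+G)) powr (-r-2)"])
    show "(\<lambda>k. (real k * (real k - 1)) * (q k * (G/(a+G))^k)) sums (r * (r+1) * (G/(a+G))^2 * (1 - G/(a+G)) powr (-r-2))" if "a > 0" for a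
      using ser2[OF xr[OF that], of r] unfolding q_def by (simp add: mult.assoc)
    show "c * exp (- a) * a powr (\<nu> + r - 1) * (a + G) powr - r * (r * (r+1) * (G/(a+G))^2 * (1 - G / (a + G)) powr (-r-2)) =
          c * (r * (r+1)) * G^2 * (exp (- a) * a powr (\<nu> - 2 - 1))" if "a > 0" for a
    proof -
      have K: "a powr (\<nu>+r-1) * (a+G) powr (-r) * ((a/(a+G)) powr (-r - 2) * (G/(a+G))^2) = G^2 * a powr (\<nu> - 2 - 1)"
        using key[where a=a and b="a+G" and G=G and \<nu>=\<nu> and r=r and j=2] that G0 by simp
      have "c * exp (- a) * a powr (\<nu> + r - 1) * (a + G) powr - r * (r * (r+1) * (G/(a+G))^2 * (a/(a+G)) powr (-r-2))
          = (c * (r * (r+1)) * exp (-a)) * (a powr (\<nu>+r-1) * (a+G) powr (-r) * ((a/(a+G)) powr (-r - 2) * (G/(a+G))^2))"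
        by (simp only: mult_ac)
      also have "\<dots> = c * (r * (r+1)) * G^2 * (exp (- a) * a powr (\<nu> - 2 - 1))" unfolding K by (simp only: mult_ac)
      finally show ?thesis unfolding om[OF that] .
    qed
    show "0 \<le> real k * (real k - 1)" for k by (cases k) auto
  qed (use that in simp)
  have Gn: "Gamma \<nu> > 0" using assms(2) by (simp add: Gamma_real_pos)
  have A: "alpha d \<nu> \<gamma> = I" using alpha_eq by auto
  have P0: "(\<lambda>k. alpha d \<nu> \<gamma> k) sums 1"
    using S0 Gn unfolding A c_def by simp
  define m where "m = real d * \<gamma>\<^sup>2 / (2 * \<nu> - 2)"
  have mval: "m = r * G / (\<nu> - 1)" unfolding m_def r_def G_def by (simp add: field_simps)
  have P1: "(\<lambda>k. real k * alpha d \<nu> \<gamma> k) sums m" if "\<nu> > 1"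
  proof -
    have g: "Gamma \<nu> = (\<nu>-1) * Gamma (\<nu>-1)" using Gamma_plus1[of "\<nu>-1"] that nonpos_Ints_nonpos by force
    have gp: "Gamma (\<nu>-1) > 0" using that by (simp add: Gamma_real_pos)
    have h: "1/(y*x)*r*G*x = r*G/y" if "x > 0" "y > 0" for x y :: real using that by (simp add: field_simps)
    have "c * r * G * Gamma (\<nu> - 1) = m" unfolding mval c_def g using h[OF gp, of "\<nu>-1"] that by simp
    thus ?thesis using S1[OF that] unfolding A by simp
  qed
  have P2: "(\<lambda>k. (real k - m)\<^sup>2 * alpha d \<nu> \<gamma> k) sums
             (real d * \<gamma>\<^sup>2 / (2 * (\<nu> - 1)) *
               (1 + \<gamma>\<^sup>2 / 2 * ((real d + 2 * (\<nu> - 1)) / ((\<nu> - 1) * (\<nu> - 2)))))" if "\<nu> > 2"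
  proof -
    have g: "Gamma \<nu> = (\<nu>-1) * Gamma (\<nu>-1)" using Gamma_plus1[of "\<nu>-1"] that nonpos_Ints_nonpos by force
    have g2: "Gamma (\<nu>-1) = (\<nu>-2) * Gamma (\<nu>-2)" using Gamma_plus1[of "\<nu>-2"] that nonpos_Ints_nonpos by force
    have gp: "Gamma (\<nu>-2) > 0" using that by (simp add: Gamma_real_pos)
    have v2: "c * (r * (r+1)) * G^2 * Gamma (\<nu> - 2) = r * (r+1) * G^2 / ((\<nu>-1)*(\<nu>-2))"
    proof -
      have h: "1/(y*(z*x))*(r*(r+1))*G^2*x = r*(r+1)*G^2/(y*z)" if "x > 0" "y > 0" "z > 0" for x y z :: real
        using that by (simp add: field_simps)
      show ?thesis unfolding c_def g g2 using h[OF gp, of "\<nu>-1" "\<nu>-2"] that by simp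
    qed
    have s2: "(\<lambda>k. (real k * (real k - 1)) * alpha d \<nu> \<gamma> k) sums (r * (r+1) * G^2 / ((\<nu>-1)*(\<nu>-2)))"
      using S2[OF that] unfolding A v2 .
    have s1: "(\<lambda>k. (1 - 2*m) * (real k * alpha d \<nu> \<gamma> k)) sums ((1 - 2*m) * m)"
      by (rule sums_mult, rule P1) (use that in simp)
    have s0: "(\<lambda>k. m^2 * alpha d \<nu> \<gamma> k) sums (m^2 * 1)"
      by (rule sums_mult, rule P0)
    have "(\<lambda>k. (real k * (real k - 1)) * alpha d \<nu> \<gamma> k + (1 - 2*m) * (real k * alpha d \<nu> \<gamma> k) + m^2 * alpha d \<nu> \<gamma> k)
       sums (r * (r+1) * G^2 / ((\<nu>-1)*(\<nu>-2)) + (1 - 2*m) * m + m^2 * 1)"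
      by (intro sums_add s2 s1 s0)
    moreover have "(\<lambda>k. (real k * (real k - 1)) * alpha d \<nu> \<gamma> k + (1 - 2*m) * (real k * alpha d \<nu> \<gamma> k) + m^2 * alpha d \<nu> \<gamma> k)
       = (\<lambda>k. (real k - m)\<^sup>2 * alpha d \<nu> \<gamma> k)"
      by (rule ext) (simp add: power2_eq_square algebra_simps)
    moreover have "r * (r+1) * G^2 / ((\<nu>-1)*(\<nu>-2)) + (1 - 2*m) * m + m^2 * 1 =
         real d * \<gamma>\<^sup>2 / (2 * (\<nu> - 1)) *
               (1 + \<gamma>\<^sup>2 / 2 * ((real d + 2 * (\<nu> - 1)) / ((\<nu> - 1) * (\<nu> - 2))))"
      unfolding mval r_def G_def by (rule alg) (use that in auto)
    ultimately show ?thesis by simp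
  qed
  show ?thesis using P0 P1 P2 unfolding m_def by blast
qed

end
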